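(* Let $g:[a,b]\to\mathbb R$ be left-continuous and increasing, and let $f:[a,b]\to\mathbb R$ be $g$-Lipschitz continuous with Lipschitz constant $H$. Assume moreover that $f^C$ and $g^C$ are Lipschitz continuous with Lipschitz constant $H$. Let $\{d_k\}_{k\in\Lambda}$ be the set of discontinuity points of $g$ in $(a,b)$. Then $$\Big| f^C(a)(g^C(b)-g^C(a))+f(a)\Delta^+g(a)+\Delta^+f(a)(g^C(b)-g^C(a))+\sum_{k\in\Lambda}\big[f(d_k)\Delta^+g(d_k)+\Delta^+f(d_k)(g^C(b)-g^C(d_k))\big]-\int_{[a,b)} f\,\mathrm d\mu_g\Big|\le H^2(b-a)^2,$$ and $$\Big| \tfrac{f^C(a)+f^C(b)}{2}(g^C(b)-g^C(a))+f(a)\Delta^+g(a)+\Delta^+f(a)(g^C(b)-g^C(a))+\sum_{k\in\Lambda}\big[f(d_k)\Delta^+g(d_k)+\Delta^+f(d_k)(g^C(b)-g^C(d_k))\big]-\int_{[a,b)} f\,\mathrm d\mu_g\Big|\le \tfrac{H^2}{2}(b-a)^2.$$ (Equivalently, the sums over $\{a\}\cup\{d_k\}$ may be written as $\sum_{s\in[a,b)}[f(s)\Delta^+g(s)+\Delta^+f(s)(g^C(b)-g^C(s))]$.)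
   Context: $\mu_g$ is the Lebesgue–Stieltjes measure on $[a,b)$ with $\mu_g([c,d))=g(d)-g(c)$. For a function $\varphi:[a,b]\to\mathbb R$ having right limits, $\Delta^+\varphi(t)=\varphi(t^+)-\varphi(t)$, its jump part is $\varphi^B(t)=\sum_{s\in[a,t)}\Delta^+\varphi(s)$ and its continuous part is $\varphi^C=\varphi-\varphi^B$ (applied to both $f$ and $g$). $f$ is $g$-Lipschitz continuous with constant $H$ if $|f(t)-f(s)|\le H|g(t)-g(s)|$ for all $t,s\in[a,b]$. *)

theory Defs
  imports "HOL-Analysis.Analysis"
begin

definition rlim :: "(real \<Rightarrow> real) \<Rightarrow> real \<Rightarrow> real" where
  "rlim \<phi> t = Lim (at_right t) \<phi>"

definition jump_plus :: "(real \<Rightarrow> real) \<Rightarrow> real \<Rightarrow> real" where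
  "jump_plus \<phi> t = rlim \<phi> t - \<phi> t"

(* jump part phi^B(t) = sum_{s in [a,t)} Delta^+ phi(s) (a countable, absolutely summable sum) *)
definition jump_part :: "real \<Rightarrow> (real \<Rightarrow> real) \<Rightarrow> real \<Rightarrow> real" where
  "jump_part a \<phi> t = (\<Sum>\<^sub>\<infinity>s\<in>{a..<t}. jump_plus \<phi> s)"

definition cont_part :: "real \<Rightarrow> (real \<Rightarrow> real) \<Rightarrow> real \<Rightarrow> real" where
  "cont_part a \<phi> t = \<phi> t - jump_part a \<phi> t"

(* extension of g from [a,b] to R by constants; left-continuous if g is *)
definition ext_ab :: "real \<Rightarrow> real \<Rightarrow> (real \<Rightarrow> real) \<Rightarrow> real \<Rightarrow> real" where
  "ext_ab a b g t = g (max a (min b t))"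

(* Lebesgue-Stieltjes measure mu_g with mu_g([c,d)) = g(d) - g(c) for a left-continuous
   nondecreasing g: obtained by reflecting the library's interval_measure (built on (c,d]
   for right-continuous functions) through x |-> -x. *)
definition LS_measure :: "real \<Rightarrow> real \<Rightarrow> (real \<Rightarrow> real) \<Rightarrow> real measure" where
  "LS_measure a b g = distr (interval_measure (\<lambda>x. - ext_ab a b g (- x))) borel uminus"

definition g_lipschitz_on :: "real set \<Rightarrow> real \<Rightarrow> (real \<Rightarrow> real) \<Rightarrow> (real \<Rightarrow> real) \<Rightarrow> bool" where
  "g_lipschitz_on S H g f \<longleftrightarrow> (\<forall>s\<in>S. \<forall>t\<in>S. \<bar>f t - f s\<bar> \<le> H * \<bar>g t - g s\<bar>)"

definition lipschitz_const_on :: "real set \<Rightarrow> real \<Rightarrow> (real \<Rightarrow> real) \<Rightarrow> bool" where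
  "lipschitz_const_on S H f \<longleftrightarrow> (\<forall>s\<in>S. \<forall>t\<in>S. \<bar>f t - f s\<bar> \<le> H * \<bar>t - s\<bar>)"

end

theory Submission
  imports Defs
begin

lemma rlim_mono:
  fixes \<phi> :: "real \<Rightarrow> real"
  assumes "mono_on {a..b} \<phi>" "a \<le> s" "s < b"
  shows "(\<phi> \<longlongrightarrow> rlim \<phi> s) (at_right s)"
proof -
  have L0: "(\<phi> \<longlongrightarrow> Inf (\<phi> ` ({s<..} \<inter> {..b}))) (at s within ({s<..} \<inter> {..b}))"
    by (rule Lim_right_bound[where K="\<phi> s"]) (use assms in \<open>auto intro: mono_onD\<close>)
  have "at s within ({s<..} \<inter> {..b}) = at_right s"
    by (rule at_within_nhd[of _ "{..<b}"]) (use assms in auto)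
  with L0 have L: "(\<phi> \<longlongrightarrow> Inf (\<phi> ` ({s<..} \<inter> {..b}))) (at_right s)" by simp
  have "rlim \<phi> s = Inf (\<phi> ` ({s<..} \<inter> {..b}))" unfolding rlim_def
    by (rule tendsto_Lim) (simp_all add: L)
  with L show ?thesis by simp
qed

lemma rlim_bounds:
  fixes \<phi> :: "real \<Rightarrow> real"
  assumes "mono_on {a..b} \<phi>" "a \<le> s" "s < t" "t \<le> b"
  shows "\<phi> s \<le> rlim \<phi> s" "rlim \<phi> s \<le> \<phi> t"
proof -
  have L: "(\<phi> \<longlongrightarrow> rlim \<phi> s) (at_right s)" using rlim_mono assms by force
  have ev: "eventually (\<lambda>x. x \<in> {s<..<t}) (at_right s)"
    unfolding eventually_at_right_field using assms by auto
  show "\<phi> s \<le> rlim \<phi> s"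
    by (rule tendsto_lowerbound[OF L]) (use ev assms in \<open>auto elim!: eventually_mono intro: mono_onD\<close>)
  show "rlim \<phi> s \<le> \<phi> t"
    by (rule tendsto_upperbound[OF L]) (use ev assms in \<open>auto elim!: eventually_mono intro: mono_onD\<close>)
qed

lemma glip_rlim:
  fixes f g :: "real \<Rightarrow> real"
  assumes gm: "mono_on {a..b} g" and fl: "g_lipschitz_on {a..b} H g f" and H: "H \<ge> 0"
    and s: "a \<le> s" "s < b"
  shows "(f \<longlongrightarrow> rlim f s) (at_right s)" "\<bar>jump_plus f s\<bar> \<le> H * jump_plus g s"
proof -
  define \<phi> where "\<phi> x = f x + H * g x" for x
  have "mono_on {a..b} \<phi>"
  proof (rule mono_onI)
    fix x y assume xy: "x \<in> {a..b}" "y \<in> {a..b}" "x \<le> y"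
    have "g x \<le> g y" using gm xy by (auto intro: mono_onD)
    moreover have "\<bar>f y - f x\<bar> \<le> H * \<bar>g y - g x\<bar>" using fl xy unfolding g_lipschitz_on_def by blast
    ultimately show "\<phi> x \<le> \<phi> y" unfolding \<phi>_def by (auto simp: abs_le_iff right_diff_distrib)
  qed
  hence L1: "(\<phi> \<longlongrightarrow> rlim \<phi> s) (at_right s)" using rlim_mono s by blast
  have L2: "(g \<longlongrightarrow> rlim g s) (at_right s)" using rlim_mono s gm by blast
  have L3: "((\<lambda>x. \<phi> x - H * g x) \<longlongrightarrow> rlim \<phi> s - H * rlim g s) (at_right s)"
    by (intro tendsto_intros L1 L2)
  have E: "(\<lambda>x. \<phi> x - H * g x) = f" by (simp add: \<phi>_def fun_eq_iff)
  have L: "(f \<longlongrightarrow> rlim \<phi> s - H * rlim g s) (at_right s)" using L3 unfolding E .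
  have "rlim f s = rlim \<phi> s - H * rlim g s" unfolding rlim_def
    by (rule tendsto_Lim) (simp_all add: L[unfolded rlim_def])
  with L show L': "(f \<longlongrightarrow> rlim f s) (at_right s)" by simp
  have ev: "eventually (\<lambda>x. x \<in> {s<..<b}) (at_right s)"
    unfolding eventually_at_right_field using s by auto
  have "\<bar>rlim f s - f s\<bar> \<le> H * (rlim g s - g s)"
  proof (rule tendsto_le[of "at_right s"])
    show "((\<lambda>x. \<bar>f x - f s\<bar>) \<longlongrightarrow> \<bar>rlim f s - f s\<bar>) (at_right s)"
      by (intro tendsto_intros L')
    show "((\<lambda>x. H * (g x - g s)) \<longlongrightarrow> H * (rlim g s - g s)) (at_right s)"
      by (intro tendsto_intros L2)
    show "eventually (\<lambda>x. \<bar>f x - f s\<bar> \<le> H * (g x - g s)) (at_right s)"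
      using ev
    proof (rule eventually_mono)
      fix x assume x: "x \<in> {s<..<b}"
      have "g s \<le> g x" using gm x s by (auto intro: mono_onD)
      moreover have "\<bar>f x - f s\<bar> \<le> H * \<bar>g x - g s\<bar>" using fl x s unfolding g_lipschitz_on_def by auto
      ultimately show "\<bar>f x - f s\<bar> \<le> H * (g x - g s)" by simp
    qed
  qed simp
  thus "\<bar>jump_plus f s\<bar> \<le> H * jump_plus g s" unfolding jump_plus_def .
qed

lemma isCont_jump_zero:
  fixes g :: "real \<Rightarrow> real"
  assumes "isCont g t"
  shows "jump_plus g t = 0"
proof -
  have "(g \<longlongrightarrow> g t) (at_right t)"
    using assms unfolding isCont_def by (rule tendsto_within_subset) simp
  hence "rlim g t = g t" unfolding rlim_def by (rule tendsto_Lim[rotated]) simp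
  thus ?thesis unfolding jump_plus_def by simp
qed

lemma ext_left_cont:
  fixes g :: "real \<Rightarrow> real"
  assumes ab: "a < b" and glc: "\<And>t. t \<in> {a<..b} \<Longrightarrow> continuous (at_left t) g"
  shows "(ext_ab a b g \<longlongrightarrow> ext_ab a b g u) (at_left u)"
proof -
  consider "u \<le> a" | "u > b" | "u \<in> {a<..b}" by force
  then show ?thesis
  proof cases
    case 1
    have "eventually (\<lambda>y. ext_ab a b g y = ext_ab a b g u) (at_left u)"
      unfolding eventually_at_left_field using 1 ab
      by (intro exI[of _ "u - 1"]) (auto simp: ext_ab_def max_def min_def)
    then show ?thesis by (rule tendsto_eventually)
  next
    case 2
    have "eventually (\<lambda>y. ext_ab a b g y = ext_ab a b g u) (at_left u)"
      unfolding eventually_at_left_field using 2 ab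
      by (intro exI[of _ b]) (auto simp: ext_ab_def max_def min_def)
    then show ?thesis by (rule tendsto_eventually)
  next
    case 3
    have "(g \<longlongrightarrow> g u) (at_left u)" using glc[OF 3] by (simp add: continuous_within)
    moreover have "eventually (\<lambda>y. ext_ab a b g y = g y) (at_left u)"
      unfolding eventually_at_left_field using 3 ab
      by (intro exI[of _ a]) (auto simp: ext_ab_def max_def min_def)
    moreover have "ext_ab a b g u = g u" using 3 by (auto simp: ext_ab_def max_def min_def intro: arg_cong[of _ _ g])
    ultimately show ?thesis using tendsto_cong by metis
  qed
qed

lemma ext_mono:
  fixes g :: "real \<Rightarrow> real"
  assumes ab: "a \<le> b" and gm: "mono_on {a..b} g" and xy: "x \<le> y"
  shows "ext_ab a b g x \<le> ext_ab a b g y"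
  unfolding ext_ab_def using ab xy by (intro mono_onD[OF gm]) auto

locale LS =
  fixes a b :: real and g :: "real \<Rightarrow> real"
  assumes ab: "a < b" and gm: "mono_on {a..b} g"
    and glc: "\<And>t. t \<in> {a<..b} \<Longrightarrow> continuous (at_left t) g"
begin

definition "G x = - ext_ab a b g (- x)"
abbreviation "\<mu> \<equiv> LS_measure a b g"

lemma G_mono: "x \<le> y \<Longrightarrow> G x \<le> G y"
  unfolding G_def using ext_mono[of a b g "-y" "-x"] ab gm by simp

lemma G_rc: "continuous (at_right x) G"
proof -
  have "(ext_ab a b g \<longlongrightarrow> ext_ab a b g (-x)) (at_left (-x))"
    using ext_left_cont[of a b g "-x"] ab glc by simp
  hence "((\<lambda>y. ext_ab a b g (- y)) \<longlongrightarrow> ext_ab a b g (-x)) (at_right x)"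
    unfolding filterlim_at_left_to_right by simp
  hence "((\<lambda>y. - ext_ab a b g (- y)) \<longlongrightarrow> - ext_ab a b g (-x)) (at_right x)"
    by (intro tendsto_intros)
  thus ?thesis unfolding continuous_within G_def .
qed

lemma sets_mu[simp, measurable_cong]: "sets \<mu> = sets borel"
  unfolding LS_measure_def by simp

lemma space_mu[simp]: "space \<mu> = UNIV"
  using sets_eq_imp_space_eq[OF sets_mu] by simp

lemma emeasure_mu: "A \<in> sets borel \<Longrightarrow> emeasure \<mu> A = emeasure (interval_measure G) (uminus -` A)"
  unfolding LS_measure_def G_def[abs_def]
  by (subst emeasure_distr) (auto simp: sets_eq_imp_space_eq[OF sets_interval_measure])

lemma emeasure_Ico:
  assumes "a \<le> c" "c \<le> d" "d \<le> b"
  shows "emeasure \<mu> {c..<d} = ennreal (g d - g c)"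
proof -
  have "uminus -` {c..<d} = {-d<..-c}" by auto
  hence "emeasure \<mu> {c..<d} = emeasure (interval_measure G) {-d<..-c}"
    using emeasure_mu[of "{c..<d}"] by simp
  also have "\<dots> = ennreal (G (-c) - G (-d))"
    using assms by (intro emeasure_interval_measure_Ioc G_mono G_rc) auto
  also have "G (-c) - G (-d) = g d - g c"
    using assms by (simp add: G_def ext_ab_def max_def min_def)
  finally show ?thesis .
qed

end

context LS begin

lemma emeasure_single:
  assumes s: "a \<le> s" "s < b"
  shows "emeasure \<mu> {s} = ennreal (jump_plus g s)"
proof -
  define t where "t n = s + (b - s) * inverse (real (Suc n))" for n
  define A where "A n = {s..<t n}" for n
  have tpos: "t n > s" for n using s by (simp add: t_def)
  have tle: "t n \<le> b" for n
  proof -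
    have "(b - s) * inverse (real (Suc n)) \<le> (b - s) * 1"
      using s by (intro mult_left_mono) (auto simp: field_simps)
    thus ?thesis by (simp add: t_def)
  qed
  have tlim: "t \<longlonglongrightarrow> s"
  proof -
    have "(\<lambda>n. s + (b - s) * inverse (real (Suc n))) \<longlonglongrightarrow> s + (b - s) * 0"
      by (intro tendsto_intros LIMSEQ_inverse_real_of_nat)
    thus ?thesis by (simp add: t_def[abs_def])
  qed
  have dec: "decseq A"
    unfolding decseq_def A_def t_def
  proof (intro allI impI subsetI)
    fix m n x assume mn: "m \<le> n" and x: "x \<in> {s..<s + (b - s) * inverse (real (Suc n))}"
    have "(b - s) * inverse (real (Suc n)) \<le> (b - s) * inverse (real (Suc m))"
      using s mn by (intro mult_left_mono) (auto simp: field_simps)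
    with x show "x \<in> {s..<s + (b - s) * inverse (real (Suc m))}" by auto
  qed
  have mA: "emeasure \<mu> (A n) = ennreal (g (t n) - g s)" for n
    unfolding A_def using s tpos[of n] tle[of n] by (intro emeasure_Ico) auto
  have "(\<lambda>n. emeasure \<mu> (A n)) \<longlonglongrightarrow> emeasure \<mu> (\<Inter>n. A n)"
    by (rule Lim_emeasure_decseq[OF _ dec]) (auto simp: mA[unfolded A_def] A_def)
  moreover have "(\<Inter>n. A n) = {s}"
  proof
    show "{s} \<subseteq> (\<Inter>n. A n)" using tpos by (auto simp: A_def)
    show "(\<Inter>n. A n) \<subseteq> {s}"
    proof
      fix x assume x: "x \<in> (\<Inter>n. A n)"
      hence "s \<le> x" by (auto simp: A_def)
      moreover have "x \<le> s"
        by (rule LIMSEQ_le_const[OF tlim]) (use x in \<open>auto simp: A_def less_imp_le\<close>)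
      ultimately show "x \<in> {s}" by simp
    qed
  qed
  moreover have "(\<lambda>n. emeasure \<mu> (A n)) \<longlonglongrightarrow> ennreal (jump_plus g s)"
  proof -
    have "filterlim t (at_right s) sequentially"
      by (rule tendsto_imp_filterlim_at_right[OF tlim]) (simp add: tpos)
    hence "(\<lambda>n. g (t n)) \<longlonglongrightarrow> rlim g s"
      using filterlim_compose[OF rlim_mono[OF gm s]] by blast
    hence "(\<lambda>n. ennreal (g (t n) - g s)) \<longlonglongrightarrow> ennreal (rlim g s - g s)"
      by (intro tendsto_intros)
    thus ?thesis unfolding mA jump_plus_def .
  qed
  ultimately show ?thesis using LIMSEQ_unique by metis
qed

lemma jump_nonneg: "a \<le> s \<Longrightarrow> s < b \<Longrightarrow> jump_plus g s \<ge> 0"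
  using rlim_bounds(1)[OF gm, of s b] unfolding jump_plus_def by simp

lemma measure_single: "a \<le> s \<Longrightarrow> s < b \<Longrightarrow> measure \<mu> {s} = jump_plus g s"
  using emeasure_single jump_nonneg by (simp add: measure_def)

lemma measure_Ico: "a \<le> c \<Longrightarrow> c \<le> d \<Longrightarrow> d \<le> b \<Longrightarrow> measure \<mu> {c..<d} = g d - g c"
  using emeasure_Ico mono_onD[OF gm, of c d] by (simp add: measure_def)

lemma fin_sub: "A \<subseteq> {a..<b} \<Longrightarrow> emeasure \<mu> A < \<infinity>"
  using emeasure_mono[of A "{a..<b}" \<mu>] emeasure_Ico[of a b] ab
  by (auto simp: less_top[symmetric] top_unique)

end

lemma finite_in_sets:
  assumes "finite F" "\<And>x. x \<in> F \<Longrightarrow> {x} \<in> sets M"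
  shows "F \<in> sets M"
proof -
  have "F = (\<Union>s\<in>F. {s})" by auto
  also have "\<dots> \<in> sets M" using assms by (intro sets.finite_UN) auto
  finally show ?thesis .
qed

lemma set_int_split_finite:
  fixes h :: "'a \<Rightarrow> real"
  assumes hi: "set_integrable M A h" and A: "A \<in> sets M" and F: "finite F" "F \<subseteq> A"
    and sing: "\<And>x. x \<in> F \<Longrightarrow> {x} \<in> sets M" and fin: "emeasure M A < \<infinity>"
  shows "(LINT x:A|M. h x) = (LINT x:(A-F)|M. h x) + (\<Sum>s\<in>F. h s * measure M {s})"
proof -
  have Fs: "F \<in> sets M" using finite_in_sets F sing by blast
  have "A = (A - F) \<union> F" using F by auto
  hence "(LINT x:A|M. h x) = (LINT x:((A - F) \<union> F)|M. h x)" by simp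
  also have "\<dots> = (LINT x:(A-F)|M. h x) + (LINT x:F|M. h x)"
    by (rule set_integral_Un) (use hi A Fs F in \<open>auto intro: set_integrable_subset\<close>)
  also have "(LINT x:F|M. h x) = (\<integral>x. h x * indicator F x \<partial>M)"
    unfolding set_lebesgue_integral_def by (simp add: mult.commute)
  also have "\<dots> = (\<Sum>s\<in>F. h s * measure M {s})"
  proof (rule integral_indicator_finite_real)
    fix s assume s: "s \<in> F"
    show "{s} \<in> sets M" using sing s .
    have "emeasure M {s} \<le> emeasure M A" using s F A by (intro emeasure_mono) auto
    thus "emeasure M {s} < \<infinity>" using fin by order
  qed (use F in auto)
  finally show ?thesis .
qed

lemma meas_diff_finite:
  assumes A: "A \<in> sets M" and F: "finite F" "F \<subseteq> A"
    and sing: "\<And>x. x \<in> F \<Longrightarrow> {x} \<in> sets M" and fin: "emeasure M A < \<infinity>"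
  shows "measure M (A - F) = measure M A - (\<Sum>s\<in>F. measure M {s})"
proof -
  have Fs: "F \<in> sets M" using finite_in_sets F sing by blast
  have "measure M (A - F) = measure M A - measure M F"
    using fin A Fs F by (intro measure_Diff) auto
  moreover have "measure M F = (\<Sum>s\<in>F. measure M {s})"
  proof (rule measure_eq_sum_singleton)
    fix s assume s: "s \<in> F"
    have "emeasure M {s} \<le> emeasure M A" using s F A sing by (intro emeasure_mono) auto
    thus "emeasure M {s} \<noteq> \<infinity>" using fin by (auto simp: top_unique)
  qed (use F sing in auto)
  ultimately show ?thesis by simp
qed

lemma set_int_bound:
  fixes h :: "'a \<Rightarrow> real"
  assumes hi: "set_integrable M A h" and A: "A \<in> sets M" and fin: "emeasure M A < \<infinity>"
    and bnd: "\<And>x. x \<in> A \<Longrightarrow> \<bar>h x\<bar> \<le> B"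
  shows "\<bar>LINT x:A|M. h x\<bar> \<le> B * measure M A"
proof -
  have i1: "integrable M (\<lambda>x. indicator A x *\<^sub>R h x)" using hi unfolding set_integrable_def .
  have i2: "integrable M (\<lambda>x. B * indicator A x)"
    using A fin by (intro integrable_mult_right integrable_real_indicator) (auto simp: less_top)
  have "\<bar>LINT x:A|M. h x\<bar> \<le> (\<integral>x. norm (indicator A x *\<^sub>R h x) \<partial>M)"
    unfolding set_lebesgue_integral_def using integral_norm_bound[of M "\<lambda>x. indicator A x *\<^sub>R h x"]
    by simp
  also have "\<dots> \<le> (\<integral>x. B * indicator A x \<partial>M)"
    by (rule integral_mono) (use i1 i2 bnd in \<open>auto simp: indicator_def\<close>)
  also have "\<dots> = B * measure M A" using A by simp
  finally show ?thesis .
qed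

lemma dom_summable:
  fixes \<psi> \<phi> :: "'a \<Rightarrow> real"
  assumes "\<phi> summable_on A" "\<And>x. x \<in> A \<Longrightarrow> \<bar>\<psi> x\<bar> \<le> \<phi> x"
  shows "\<psi> summable_on A" "\<bar>infsum \<psi> A\<bar> \<le> infsum \<phi> A"
proof -
  have a: "(\<lambda>x. \<bar>\<psi> x\<bar>) summable_on A"
    by (rule summable_on_comparison_test[OF assms(1)]) (use assms(2) in auto)
  hence a': "(\<lambda>x. norm (\<psi> x)) summable_on A" by simp
  thus "\<psi> summable_on A" using summable_on_iff_abs_summable_on_real by blast
  have "\<bar>infsum \<psi> A\<bar> \<le> infsum (\<lambda>x. norm (\<psi> x)) A"
    using norm_infsum_bound[OF a'] by simp
  also have "\<dots> \<le> infsum \<phi> A" using a assms by (intro infsum_mono) auto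
  finally show "\<bar>infsum \<psi> A\<bar> \<le> infsum \<phi> A" .
qed

lemma glip_mono:
  fixes f g :: "real \<Rightarrow> real"
  assumes gm: "mono_on {a..b} g" and fl: "g_lipschitz_on {a..b} H g f"
  shows "mono_on {a..b} (\<lambda>x. f x + H * g x)"
proof (rule mono_onI)
  fix x y assume xy: "x \<in> {a..b}" "y \<in> {a..b}" "x \<le> y"
  have "g x \<le> g y" using gm xy by (auto intro: mono_onD)
  moreover have "\<bar>f y - f x\<bar> \<le> H * \<bar>g y - g x\<bar>" using fl xy unfolding g_lipschitz_on_def by blast
  ultimately show "f x + H * g x \<le> f y + H * g y" by (auto simp: abs_le_iff right_diff_distrib)
qed

lemma mono_ind_meas:
  fixes \<phi> :: "real \<Rightarrow> real"
  assumes "mono_on {a..b} \<phi>"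
  shows "(\<lambda>x. indicator {a..b} x * \<phi> x) \<in> borel_measurable borel"
  using borel_measurable_mono_on_fnc[OF assms] borel_measurable_restrict_space_iff[of "{a..b}" borel \<phi>]
  by simp

locale LSF = LS +
  fixes f :: "real \<Rightarrow> real" and H :: real
  assumes fl: "g_lipschitz_on {a..b} H g f" and Hnn: "H \<ge> 0"
    and fCl: "lipschitz_const_on {a..b} H (cont_part a f)"
    and gCl: "lipschitz_const_on {a..b} H (cont_part a g)"
begin

abbreviation "Jg \<equiv> jump_plus g"
abbreviation "Jf \<equiv> jump_plus f"

lemma Jg_nonneg: "s \<in> {a..<b} \<Longrightarrow> Jg s \<ge> 0" using jump_nonneg by auto

lemma Jf_bound: "s \<in> {a..<b} \<Longrightarrow> \<bar>Jf s\<bar> \<le> H * Jg s"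
  using glip_rlim(2)[OF gm fl Hnn] by auto

lemma sing_sets[simp]: "{x} \<in> sets \<mu>" by simp

lemma sum_Jg_le:
  assumes F: "finite F" "F \<subseteq> {a..<b}"
  shows "(\<Sum>s\<in>F. Jg s) \<le> g b - g a"
proof -
  have "measure \<mu> ({a..<b} - F) = measure \<mu> {a..<b} - (\<Sum>s\<in>F. measure \<mu> {s})"
    using F fin_sub by (intro meas_diff_finite) auto
  moreover have "(\<Sum>s\<in>F. measure \<mu> {s}) = (\<Sum>s\<in>F. Jg s)"
    using F measure_single by (intro sum.cong) auto
  moreover have "measure \<mu> {a..<b} = g b - g a" using measure_Ico ab by simp
  ultimately show ?thesis using measure_nonneg[of \<mu> "{a..<b} - F"] by linarith
qed

lemma Jg_summable: "Jg summable_on {a..<b}"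
  by (rule nonneg_bdd_above_summable_on) (use Jg_nonneg sum_Jg_le in \<open>auto intro!: bdd_aboveI\<close>)

lemma Jg_summable_sub: "A \<subseteq> {a..<b} \<Longrightarrow> Jg summable_on A"
  using summable_on_subset_banach Jg_summable by blast

lemma Jg_infsum_nonneg: "A \<subseteq> {a..<b} \<Longrightarrow> infsum Jg A \<ge> 0"
  by (rule infsum_nonneg) (use Jg_nonneg in auto)

lemma Jg_infsum_mono: "A \<subseteq> B \<Longrightarrow> B \<subseteq> {a..<b} \<Longrightarrow> infsum Jg A \<le> infsum Jg B"
  by (rule infsum_mono_neutral) (use Jg_summable_sub Jg_nonneg in auto)

lemma HJg_summable: "A \<subseteq> {a..<b} \<Longrightarrow> (\<lambda>s. H * Jg s) summable_on A"
  using Jg_summable_sub summable_on_cmult_right by blast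

lemma Jf_summable: "A \<subseteq> {a..<b} \<Longrightarrow> Jf summable_on A"
  by (rule dom_summable(1)[OF HJg_summable]) (use Jf_bound in auto)

lemma Jf_infsum_bound: "A \<subseteq> {a..<b} \<Longrightarrow> \<bar>infsum Jf A\<bar> \<le> H * infsum Jg A"
proof -
  assume A: "A \<subseteq> {a..<b}"
  have "\<bar>infsum Jf A\<bar> \<le> infsum (\<lambda>s. H * Jg s) A"
    by (rule dom_summable(2)[OF HJg_summable[OF A]]) (use A Jf_bound in auto)
  also have "\<dots> = H * infsum Jg A" using infsum_cmult_right[of H Jg A] Jg_summable_sub[OF A] by simp
  finally show ?thesis .
qed

lemma f_meas: "(\<lambda>x. indicator {a..b} x * f x) \<in> borel_measurable borel"
proof -
  have "(\<lambda>x. indicator {a..b} x * (f x + H * g x) - H * (indicator {a..b} x * g x)) \<in> borel_measurable borel"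
    using mono_ind_meas[OF glip_mono[OF gm fl]] mono_ind_meas[OF gm] by measurable
  moreover have "(\<lambda>x. indicator {a..b} x * (f x + H * g x) - H * (indicator {a..b} x * g x))
     = (\<lambda>x. indicator {a..b} x * f x)" by (auto simp: fun_eq_iff algebra_simps)
  ultimately show ?thesis by simp
qed

definition "Bf = \<bar>f a\<bar> + H * (g b - g a)"

lemma f_bound: "x \<in> {a..b} \<Longrightarrow> \<bar>f x\<bar> \<le> Bf"
proof -
  assume x: "x \<in> {a..b}"
  have "\<bar>f x - f a\<bar> \<le> H * \<bar>g x - g a\<bar>" using fl x ab unfolding g_lipschitz_on_def by auto
  moreover have "g a \<le> g x" "g x \<le> g b" using x gm ab by (auto intro: mono_onD)
  ultimately have "\<bar>f x - f a\<bar> \<le> H * (g b - g a)"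
    using Hnn by (smt (verit) mult_left_mono)
  thus ?thesis unfolding Bf_def by linarith
qed

lemma f_int: "S \<subseteq> {a..<b} \<Longrightarrow> S \<in> sets borel \<Longrightarrow> set_integrable \<mu> S f"
proof -
  assume S: "S \<subseteq> {a..<b}" "S \<in> sets borel"
  have m: "(\<lambda>x. indicator {a..b} x * f x) \<in> borel_measurable \<mu>"
    using f_meas measurable_cong_sets[OF sets_mu refl] by blast
  have ae: "AE x in \<mu>. x \<in> S \<longrightarrow> norm (indicator {a..b} x * f x) \<le> Bf"
  proof (rule AE_I2, intro impI)
    fix x assume "x \<in> S"
    hence "x \<in> {a..b}" using S by auto
    thus "norm (indicator {a..b} x * f x) \<le> Bf" using f_bound by simp
  qed
  have "integrable \<mu> (\<lambda>x. indicator S x *\<^sub>R (indicator {a..b} x * f x))"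
    by (rule integrableI_bounded_set_indicator[OF _ m _ ae]) (use S fin_sub in auto)
  moreover have "(\<lambda>x. indicator S x *\<^sub>R (indicator {a..b} x * f x)) = (\<lambda>x. indicator S x *\<^sub>R f x)"
    using S by (auto simp: fun_eq_iff indicator_def)
  ultimately show ?thesis unfolding set_integrable_def by simp
qed

lemma fC_cont: "continuous_on {a..b} (cont_part a f)"
proof -
  have "lipschitz_on H {a..b} (cont_part a f)"
    using fCl Hnn unfolding lipschitz_on_def lipschitz_const_on_def dist_real_def by (auto simp: abs_minus_commute)
  thus ?thesis by (rule lipschitz_on_continuous_on)
qed

end

context LSF begin

lemma gC_diff:
  assumes x: "x \<in> {a..b}"
  shows "cont_part a g b - cont_part a g x = g b - g x - infsum Jg {x..<b}"
proof -
  have "{a..<b} = {a..<x} \<union> {x..<b}" using x by auto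
  hence "infsum Jg {a..<b} = infsum Jg {a..<x} + infsum Jg {x..<b}"
    using x by (simp add: infsum_Un_disjoint Jg_summable_sub ivl_disj_int_two(3))
  thus ?thesis unfolding cont_part_def jump_part_def by simp
qed

lemma fC_eq: "f x = cont_part a f x + infsum Jf {a..<x}"
  unfolding cont_part_def jump_part_def by simp

lemma gC_bound: "s \<in> {a..b} \<Longrightarrow> \<bar>cont_part a g b - cont_part a g s\<bar> \<le> H * (b - a)"
proof -
  assume s: "s \<in> {a..b}"
  have "\<bar>cont_part a g b - cont_part a g s\<bar> \<le> H * \<bar>b - s\<bar>"
  proof -
    have "b \<in> {a..b}" using ab by auto
    thus ?thesis using gCl s unfolding lipschitz_const_on_def by blast
  qed
  also have "\<dots> \<le> H * (b - a)" using s Hnn by (intro mult_left_mono) auto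
  finally show ?thesis .
qed

end

context LSF begin

lemma core_eps:
  fixes c M \<epsilon> :: real
  assumes cM: "\<And>x. x \<in> {a..b} \<Longrightarrow> \<bar>cont_part a f x - c\<bar> \<le> M"
    and KT: "\<And>s. s \<in> {a..<b} \<Longrightarrow>
       \<bar>f s * Jg s + Jf s * (cont_part a g b - cont_part a g s)\<bar> \<le> KT * Jg s"
    and Tsum: "\<And>A. A \<subseteq> {a..<b} \<Longrightarrow>
       (\<lambda>s. f s * Jg s + Jf s * (cont_part a g b - cont_part a g s)) summable_on A"
    and F: "finite F" "F \<subseteq> {a..<b}"
  defines "R \<equiv> {a..<b} - F"
  shows "\<bar>c * (cont_part a g b - cont_part a g a)
          + (\<Sum>\<^sub>\<infinity>s\<in>{a..<b}. f s * Jg s + Jf s * (cont_part a g b - cont_part a g s))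
          - (LINT x:{a..<b}|\<mu>. f x)\<bar>
        \<le> M * (cont_part a g b - cont_part a g a)
           + (KT + M + \<bar>c\<bar> + 2 * H * (g b - g a)) * infsum Jg R"
proof -
  define gC where "gC = cont_part a g"
  define fC where "fC = cont_part a f"
  define T where "T s = f s * Jg s + Jf s * (gC b - gC s)" for s
  define X where "X = gC b - gC a"
  define W where "W = {a..<b}"
  define eF where "eF = infsum Jg R"
  have RW: "R \<subseteq> W" "R = W - F" unfolding R_def W_def by auto
  have FW: "F \<subseteq> W" using F unfolding W_def by auto
  have Fs: "F \<in> sets borel" using finite_in_sets[of F borel] F by simp
  have Rs: "R \<in> sets borel" unfolding R_def using Fs by auto
  have Rfin: "emeasure \<mu> R < \<infinity>" using fin_sub RW unfolding W_def by auto
  have Rsub: "R \<subseteq> {a..b}" using RW unfolding W_def by auto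
  have eF0: "eF \<ge> 0" unfolding eF_def using Jg_infsum_nonneg RW unfolding W_def by auto
  have sJg: "sum Jg F \<le> g b - g a" using sum_Jg_le F by simp
  have sJg0: "sum Jg F \<ge> 0" using Jg_nonneg F by (intro sum_nonneg) auto
  have WFR: "infsum Jg W = sum Jg F + eF"
  proof -
    have "W = F \<union> R" using FW RW by auto
    moreover have "infsum Jg (F \<union> R) = infsum Jg F + infsum Jg R"
      by (rule infsum_Un_disjoint) (use RW FW in \<open>auto simp: W_def R_def intro!: Jg_summable_sub\<close>)
    ultimately show ?thesis using F by (simp add: eF_def)
  qed
  have Xeq: "X = g b - g a - sum Jg F - eF"
    using gC_diff[of a] ab WFR unfolding X_def gC_def W_def by simp
  have I1: "(LINT x:W|\<mu>. f x) = (LINT x:R|\<mu>. f x) + (\<Sum>s\<in>F. f s * Jg s)"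
  proof -
    have "(LINT x:W|\<mu>. f x) = (LINT x:(W-F)|\<mu>. f x) + (\<Sum>s\<in>F. f s * measure \<mu> {s})"
      by (rule set_int_split_finite) (use f_int F FW fin_sub in \<open>auto simp: W_def\<close>)
    moreover have "(\<Sum>s\<in>F. f s * measure \<mu> {s}) = (\<Sum>s\<in>F. f s * Jg s)"
      using measure_single FW by (intro sum.cong) (auto simp: W_def)
    ultimately show ?thesis using RW by simp
  qed
  have i_f: "set_integrable \<mu> R f" using f_int RW Rs unfolding W_def by auto
  have i_u1: "set_integrable \<mu> R (\<lambda>x. fC x - c)"
  proof -
    have cont: "continuous_on R (\<lambda>x. fC x - c)"
      using continuous_on_subset[OF fC_cont Rsub] unfolding fC_def by (intro continuous_intros)
    have m: "(\<lambda>x. indicator R x *\<^sub>R (fC x - c)) \<in> borel_measurable \<mu>"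
      using borel_measurable_continuous_on_indicator[OF Rs cont] measurable_cong_sets[OF sets_mu refl] by blast
    show ?thesis unfolding set_integrable_def
    proof (rule integrableI_bounded_set[OF _ m Rfin])
      show "R \<in> sets \<mu>" using Rs by simp
      show "AE x in \<mu>. x \<in> R \<longrightarrow> norm (indicator R x *\<^sub>R (fC x - c)) \<le> M"
        by (rule AE_I2) (use cM Rsub in \<open>auto simp: fC_def\<close>)
      show "AE x in \<mu>. x \<notin> R \<longrightarrow> indicator R x *\<^sub>R (fC x - c) = 0" by simp
    qed
  qed
  have i_c: "set_integrable \<mu> R (\<lambda>x. c)"
  proof -
    have ae: "AE x in \<mu>. x \<in> R \<longrightarrow> norm c \<le> \<bar>c\<bar>" by simp
    show ?thesis unfolding set_integrable_def
      by (rule integrableI_bounded_set_indicator[OF _ _ Rfin ae]) (use Rs in auto)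
  qed
  define fB where "fB x = (\<Sum>s\<in>F. Jf s * indicator {s<..} x)" for x
  have fB_meas: "fB \<in> borel_measurable \<mu>"
  proof -
    have "fB \<in> borel_measurable borel" unfolding fB_def[abs_def] by measurable
    thus ?thesis using measurable_cong_sets[OF sets_mu refl] by blast
  qed
  have i_B: "set_integrable \<mu> R fB"
  proof -
    have ae: "AE x in \<mu>. x \<in> R \<longrightarrow> norm (fB x) \<le> (\<Sum>s\<in>F. \<bar>Jf s\<bar>)"
    proof (rule AE_I2, intro impI)
      fix x
      have "norm (fB x) \<le> (\<Sum>s\<in>F. \<bar>Jf s * indicator {s<..} x\<bar>)" unfolding fB_def
        by (simp add: sum_abs)
      also have "\<dots> \<le> (\<Sum>s\<in>F. \<bar>Jf s\<bar>)" by (intro sum_mono) (auto simp: indicator_def)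
      finally show "norm (fB x) \<le> (\<Sum>s\<in>F. \<bar>Jf s\<bar>)" .
    qed
    show ?thesis unfolding set_integrable_def
      by (rule integrableI_bounded_set_indicator[OF _ fB_meas Rfin ae]) (use Rs in auto)
  qed
  define r where "r x = f x - (fC x - c) - c - fB x" for x
  have i_r: "set_integrable \<mu> R r"
    unfolding r_def[abs_def]
    by (rule set_integral_diff(1)[OF set_integral_diff(1)[OF set_integral_diff(1)[OF i_f i_u1] i_c] i_B])
  have i_fC: "set_integrable \<mu> R fC"
    using set_integral_add(1)[OF i_u1 i_c] by simp
  have Lsplit: "(LINT x:R|\<mu>. f x) = (LINT x:R|\<mu>. fC x - c) + (LINT x:R|\<mu>. c)
       + (LINT x:R|\<mu>. fB x) + (LINT x:R|\<mu>. r x)"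
  proof -
    have "(LINT x:R|\<mu>. r x) = (LINT x:R|\<mu>. f x) - (LINT x:R|\<mu>. fC x - c) - (LINT x:R|\<mu>. c)
       - (LINT x:R|\<mu>. fB x)"
      unfolding r_def[abs_def] using i_f i_u1 i_c i_B i_fC by simp
    thus ?thesis by simp
  qed
  have Lc: "(LINT x:R|\<mu>. c) = measure \<mu> R * c"
    using set_integral_const[OF _ , of R \<mu> c] Rs Rfin by simp
  have mR: "measure \<mu> R = g b - g a - sum Jg F"
  proof -
    have "measure \<mu> (W - F) = measure \<mu> W - (\<Sum>s\<in>F. measure \<mu> {s})"
      by (rule meas_diff_finite) (use F FW fin_sub in \<open>auto simp: W_def\<close>)
    moreover have "(\<Sum>s\<in>F. measure \<mu> {s}) = sum Jg F"
      using measure_single FW by (intro sum.cong) (auto simp: W_def)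
    moreover have "measure \<mu> W = g b - g a" using measure_Ico ab unfolding W_def by simp
    ultimately show ?thesis using RW by simp
  qed
  have mRX: "measure \<mu> R = X + eF" using mR Xeq by simp
  have L1: "\<bar>LINT x:R|\<mu>. fC x - c\<bar> \<le> M * measure \<mu> R"
    by (rule set_int_bound[OF i_u1 _ Rfin]) (use Rs cM Rsub in \<open>auto simp: fC_def\<close>)
  define es where "es s = infsum Jg (R \<inter> {s..<b})" for s
  have es: "0 \<le> es s" "es s \<le> eF" for s
    unfolding es_def eF_def using RW unfolding W_def
    by (auto intro!: Jg_infsum_nonneg Jg_infsum_mono)
  have mRs: "measure \<mu> (R \<inter> {s<..}) = gC b - gC s + es s" if s: "s \<in> F" for s
  proof -
    have sW: "s \<in> W" using s FW by auto
    have eq: "R \<inter> {s<..} = {s..<b} - (F \<inter> {s..<b})" using s sW unfolding R_def W_def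
      by (auto simp: order_le_less)
    have "measure \<mu> ({s..<b} - (F \<inter> {s..<b})) = measure \<mu> {s..<b} - (\<Sum>u\<in>F \<inter> {s..<b}. measure \<mu> {u})"
      by (rule meas_diff_finite) (use F sW fin_sub in \<open>auto simp: W_def\<close>)
    moreover have "(\<Sum>u\<in>F \<inter> {s..<b}. measure \<mu> {u}) = sum Jg (F \<inter> {s..<b})"
      using measure_single FW by (intro sum.cong) (auto simp: W_def)
    moreover have "measure \<mu> {s..<b} = g b - g s" using measure_Ico sW unfolding W_def by simp
    moreover have "infsum Jg {s..<b} = sum Jg (F \<inter> {s..<b}) + es s"
    proof -
      have "{s..<b} = (F \<inter> {s..<b}) \<union> (R \<inter> {s..<b})" using sW unfolding R_def W_def by auto
      moreover have "infsum Jg ((F \<inter> {s..<b}) \<union> (R \<inter> {s..<b}))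
           = infsum Jg (F \<inter> {s..<b}) + infsum Jg (R \<inter> {s..<b})"
        by (rule infsum_Un_disjoint) (use sW FW RW in \<open>auto simp: W_def R_def intro!: Jg_summable_sub\<close>)
      ultimately show ?thesis using F by (simp add: es_def)
    qed
    moreover have "gC b - gC s = g b - g s - infsum Jg {s..<b}"
      using gC_diff sW unfolding gC_def W_def by auto
    ultimately show ?thesis using eq by simp
  qed
  have LB: "(LINT x:R|\<mu>. fB x) = (\<Sum>s\<in>F. Jf s * measure \<mu> (R \<inter> {s<..}))"
  proof -
    have "(LINT x:R|\<mu>. fB x) = (\<integral>x. (\<Sum>s\<in>F. Jf s * indicator (R \<inter> {s<..}) x) \<partial>\<mu>)"
      unfolding set_lebesgue_integral_def fB_def
      by (intro Bochner_Integration.integral_cong refl)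
         (simp add: sum_distrib_left indicator_inter_arith mult.left_commute)
    also have "\<dots> = (\<Sum>s\<in>F. (\<integral>x. Jf s * indicator (R \<inter> {s<..}) x \<partial>\<mu>))"
    proof (rule Bochner_Integration.integral_sum)
      fix s assume "s \<in> F"
      have "emeasure \<mu> (R \<inter> {s<..}) < \<infinity>" using RW unfolding W_def by (intro fin_sub) auto
      thus "integrable \<mu> (\<lambda>x. Jf s * indicator (R \<inter> {s<..}) x)"
        using Rs by (intro integrable_mult_right integrable_real_indicator) (auto simp: less_top)
    qed
    also have "\<dots> = (\<Sum>s\<in>F. Jf s * measure \<mu> (R \<inter> {s<..}))" by simp
    finally show ?thesis .
  qed
  have LB2: "(LINT x:R|\<mu>. fB x) = (\<Sum>s\<in>F. Jf s * (gC b - gC s)) + (\<Sum>s\<in>F. Jf s * es s)"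
    unfolding LB by (simp add: mRs distrib_left sum.distrib)
  have esum: "\<bar>\<Sum>s\<in>F. Jf s * es s\<bar> \<le> H * eF * (g b - g a)"
  proof -
    have "\<bar>\<Sum>s\<in>F. Jf s * es s\<bar> \<le> (\<Sum>s\<in>F. \<bar>Jf s * es s\<bar>)" by (rule sum_abs)
    also have "\<dots> \<le> (\<Sum>s\<in>F. H * eF * Jg s)"
    proof (rule sum_mono)
      fix s assume "s \<in> F"
      hence "\<bar>Jf s\<bar> \<le> H * Jg s" "0 \<le> Jg s" using Jf_bound Jg_nonneg FW unfolding W_def by auto
      hence "\<bar>Jf s\<bar> * \<bar>es s\<bar> \<le> (H * Jg s) * eF" using es[of s] by (intro mult_mono) auto
      thus "\<bar>Jf s * es s\<bar> \<le> H * eF * Jg s" by (simp add: abs_mult algebra_simps)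
    qed
    also have "\<dots> = H * eF * sum Jg F" by (simp add: sum_distrib_left)
    also have "\<dots> \<le> H * eF * (g b - g a)" using sJg Hnn eF0 by (intro mult_left_mono) auto
    finally show ?thesis .
  qed
  have rb: "\<bar>r x\<bar> \<le> H * eF" if x: "x \<in> R" for x
  proof -
    have xab: "x \<in> {a..b}" using x Rsub by auto
    have A1: "infsum Jf {a..<x} = sum Jf (F \<inter> {a..<x}) + infsum Jf (R \<inter> {a..<x})"
    proof -
      have "{a..<x} = (F \<inter> {a..<x}) \<union> (R \<inter> {a..<x})" using x unfolding R_def by auto
      moreover have "infsum Jf ((F \<inter> {a..<x}) \<union> (R \<inter> {a..<x}))
           = infsum Jf (F \<inter> {a..<x}) + infsum Jf (R \<inter> {a..<x})"
        by (rule infsum_Un_disjoint) (use x FW RW in \<open>auto simp: W_def R_def intro!: Jf_summable\<close>)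
      ultimately show ?thesis using F by simp
    qed
    have A2: "fB x = sum Jf (F \<inter> {a..<x})"
    proof -
      have "fB x = (\<Sum>s\<in>F. if s < x then Jf s else 0)" unfolding fB_def
        by (intro sum.cong) (auto simp: indicator_def)
      also have "\<dots> = sum Jf {s\<in>F. s < x}" using F by (simp add: sum.inter_filter)
      also have "{s\<in>F. s < x} = F \<inter> {a..<x}" using FW unfolding W_def by auto
      finally show ?thesis .
    qed
    have "r x = infsum Jf (R \<inter> {a..<x})"
      unfolding r_def using fC_eq[of x] A1 A2 unfolding fC_def by simp
    hence "\<bar>r x\<bar> \<le> H * infsum Jg (R \<inter> {a..<x})"
      using Jf_infsum_bound[of "R \<inter> {a..<x}"] RW unfolding W_def by auto
    also have "\<dots> \<le> H * eF" unfolding eF_def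
      using Hnn RW by (intro mult_left_mono Jg_infsum_mono) (auto simp: W_def)
    finally show ?thesis .
  qed
  have Lr: "\<bar>LINT x:R|\<mu>. r x\<bar> \<le> H * eF * measure \<mu> R"
    by (rule set_int_bound[OF i_r _ Rfin]) (use rb Rs in auto)
  have Lr2: "H * eF * measure \<mu> R \<le> H * eF * (g b - g a)"
    using mR sJg0 Hnn eF0 by (intro mult_left_mono) auto
  have Tsum': "A \<subseteq> W \<Longrightarrow> T summable_on A" for A
    using Tsum[of A] unfolding T_def[abs_def] gC_def W_def by simp
  have Tsplit: "infsum T W = sum T F + infsum T R"
  proof -
    have "W = F \<union> R" using FW RW by auto
    moreover have "infsum T (F \<union> R) = infsum T F + infsum T R"
      by (rule infsum_Un_disjoint) (use FW RW in \<open>auto intro!: Tsum'\<close>)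
    ultimately show ?thesis using F by simp
  qed
  have Ttail: "\<bar>infsum T R\<bar> \<le> KT * eF"
  proof -
    have "\<bar>infsum T R\<bar> \<le> infsum (\<lambda>s. KT * Jg s) R"
      by (rule dom_summable(2)) (use KT RW summable_on_cmult_right[OF Jg_summable_sub[of R]]
          in \<open>auto simp: T_def gC_def W_def\<close>)
    also have "\<dots> = KT * eF" unfolding eF_def
      using infsum_cmult_right[of KT Jg R] Jg_summable_sub RW unfolding W_def by auto
    finally show ?thesis .
  qed
  have TF: "sum T F = (\<Sum>s\<in>F. f s * Jg s) + (\<Sum>s\<in>F. Jf s * (gC b - gC s))"
    unfolding T_def by (simp add: sum.distrib)
  have E: "c * X + infsum T W - (LINT x:W|\<mu>. f x)
     = infsum T R - (LINT x:R|\<mu>. fC x - c) - c * eF - (\<Sum>s\<in>F. Jf s * es s) - (LINT x:R|\<mu>. r x)"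
    using I1 Lsplit Lc LB2 Tsplit TF mRX by (simp add: algebra_simps)
  have ceF: "\<bar>c * eF\<bar> = \<bar>c\<bar> * eF" using eF0 by (simp add: abs_mult)
  have L1': "M * measure \<mu> R = M * X + M * eF" using mRX by (simp add: algebra_simps)
  have "\<bar>c * X + infsum T W - (LINT x:W|\<mu>. f x)\<bar>
      \<le> M * X + (KT + M + \<bar>c\<bar> + 2 * H * (g b - g a)) * eF"
    unfolding E using Ttail L1 L1' ceF esum Lr Lr2 by (simp add: algebra_simps)
  thus ?thesis unfolding X_def T_def W_def gC_def eF_def .
qed

end

context LSF begin

lemma tail_small:
  assumes "\<epsilon> > 0"
  shows "\<exists>F. finite F \<and> F \<subseteq> {a..<b} \<and> infsum Jg ({a..<b} - F) < \<epsilon>"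
proof -
  have "(sum Jg \<longlongrightarrow> infsum Jg {a..<b}) (finite_subsets_at_top {a..<b})"
    using has_sum_infsum[OF Jg_summable] unfolding has_sum_def .
  hence "eventually (\<lambda>F. dist (sum Jg F) (infsum Jg {a..<b}) < \<epsilon>) (finite_subsets_at_top {a..<b})"
    using assms by (rule tendstoD)
  then obtain F where F: "finite F" "F \<subseteq> {a..<b}" "dist (sum Jg F) (infsum Jg {a..<b}) < \<epsilon>"
    unfolding eventually_finite_subsets_at_top by blast
  have "infsum Jg ({a..<b}) = infsum Jg (F \<union> ({a..<b} - F))" using F by (simp add: Un_absorb1)
  also have "\<dots> = infsum Jg F + infsum Jg ({a..<b} - F)"
    by (rule infsum_Un_disjoint) (use F in \<open>auto intro!: Jg_summable_sub\<close>)
  finally have "infsum Jg ({a..<b} - F) = infsum Jg {a..<b} - sum Jg F" using F by simp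
  with F show ?thesis by (intro exI[of _ F]) (auto simp: dist_real_def)
qed

definition "KT = Bf + H * (H * (b - a))"

lemma T_bound: "s \<in> {a..<b} \<Longrightarrow>
   \<bar>f s * Jg s + Jf s * (cont_part a g b - cont_part a g s)\<bar> \<le> KT * Jg s"
proof -
  assume s: "s \<in> {a..<b}"
  have j: "Jg s \<ge> 0" "\<bar>Jf s\<bar> \<le> H * Jg s" using Jg_nonneg Jf_bound s by auto
  have fb: "\<bar>f s\<bar> \<le> Bf" using f_bound s by auto
  have gb: "\<bar>cont_part a g b - cont_part a g s\<bar> \<le> H * (b - a)" using gC_bound s by auto
  have "\<bar>f s * Jg s + Jf s * (cont_part a g b - cont_part a g s)\<bar>
     \<le> \<bar>f s\<bar> * Jg s + \<bar>Jf s\<bar> * \<bar>cont_part a g b - cont_part a g s\<bar>"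
    using j by (simp add: abs_mult abs_triangle_ineq order_trans[OF abs_triangle_ineq])
  also have "\<dots> \<le> Bf * Jg s + (H * Jg s) * (H * (b - a))"
    using j fb gb Hnn by (intro add_mono mult_mono) auto
  also have "\<dots> = KT * Jg s" by (simp add: KT_def algebra_simps)
  finally show ?thesis .
qed

lemma T_summable: "A \<subseteq> {a..<b} \<Longrightarrow>
   (\<lambda>s. f s * Jg s + Jf s * (cont_part a g b - cont_part a g s)) summable_on A"
proof -
  assume A: "A \<subseteq> {a..<b}"
  show ?thesis
    by (rule dom_summable(1)[OF summable_on_cmult_right[where c=KT, OF Jg_summable_sub[OF A]]])
       (use T_bound A in auto)
qed

lemma core:
  fixes c M :: real
  assumes cM: "\<And>x. x \<in> {a..b} \<Longrightarrow> \<bar>cont_part a f x - c\<bar> \<le> M"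
  shows "\<bar>c * (cont_part a g b - cont_part a g a)
          + (\<Sum>\<^sub>\<infinity>s\<in>{a..<b}. f s * Jg s + Jf s * (cont_part a g b - cont_part a g s))
          - (LINT x:{a..<b}|\<mu>. f x)\<bar>
        \<le> M * (cont_part a g b - cont_part a g a)" (is "?L \<le> ?R")
proof (rule field_le_epsilon)
  fix e :: real assume e: "e > 0"
  define K where "K = KT + M + \<bar>c\<bar> + 2 * H * (g b - g a)"
  have gab: "g a \<le> g b" using gm ab by (auto intro: mono_onD)
  have M0: "M \<ge> 0" using cM[of a] ab by force
  have K0: "K \<ge> 0" unfolding K_def KT_def Bf_def using gab Hnn M0 ab by simp
  obtain F where F: "finite F" "F \<subseteq> {a..<b}" "infsum Jg ({a..<b} - F) < e / (K + 1)"
    using tail_small[of "e / (K + 1)"] e K0 by auto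
  have "?L \<le> ?R + K * infsum Jg ({a..<b} - F)"
    using core_eps[OF cM T_bound T_summable F(1,2)] unfolding K_def by simp
  also have "K * infsum Jg ({a..<b} - F) \<le> K * (e / (K + 1))"
    using F K0 by (intro mult_left_mono) auto
  also have "K * (e / (K + 1)) \<le> e"
    using K0 e by (simp add: field_simps)
  finally show "?L \<le> ?R + e" by simp
qed

end

theorem mainTheorem7:
  fixes f g :: "real \<Rightarrow> real" and a b H :: real
  assumes ab: "a < b"
    and g_mono: "mono_on {a..b} g"
    and g_left_cont: "\<And>t. t \<in> {a<..b} \<Longrightarrow> continuous (at_left t) g"
    and f_glip: "g_lipschitz_on {a..b} H g f"
    and fC_lip: "lipschitz_const_on {a..b} H (cont_part a f)"
    and gC_lip: "lipschitz_const_on {a..b} H (cont_part a g)"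
  defines "S \<equiv> f a * jump_plus g a + jump_plus f a * (cont_part a g b - cont_part a g a)
            + (\<Sum>\<^sub>\<infinity>d\<in>{t \<in> {a<..<b}. \<not> isCont g t}. f d * jump_plus g d + jump_plus f d * (cont_part a g b - cont_part a g d))"
    and "I \<equiv> (LINT x : {a..<b} | LS_measure a b g. f x)"
  shows "\<bar>cont_part a f a * (cont_part a g b - cont_part a g a) + S - I\<bar> \<le> H\<^sup>2 * (b - a)\<^sup>2
       \<and> \<bar>(cont_part a f a + cont_part a f b) / 2 * (cont_part a g b - cont_part a g a) + S - I\<bar>
           \<le> H\<^sup>2 / 2 * (b - a)\<^sup>2"
proof -
  have Hnn: "H \<ge> 0"
  proof -
    have "a \<in> {a..b}" "b \<in> {a..b}" using ab by auto
    hence "\<bar>cont_part a f b - cont_part a f a\<bar> \<le> H * \<bar>b - a\<bar>"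
      using fC_lip unfolding lipschitz_const_on_def by blast
    hence "0 \<le> H * (b - a)" using ab by (smt (verit))
    thus ?thesis using ab by (simp add: zero_le_mult_iff)
  qed
  interpret LSF a b g f H
    by unfold_locales (use ab g_mono g_left_cont f_glip Hnn fC_lip gC_lip in auto)
  define gC where "gC = cont_part a g"
  define fC where "fC = cont_part a f"
  define T where "T s = f s * Jg s + Jf s * (gC b - gC s)" for s
  define X where "X = gC b - gC a"
  have T0: "T t = 0" if t: "t \<in> {a<..<b}" "isCont g t" for t
  proof -
    have "Jg t = 0" using isCont_jump_zero[OF t(2)] .
    moreover have "\<bar>Jf t\<bar> \<le> H * Jg t" using Jf_bound t by auto
    ultimately show ?thesis unfolding T_def by simp
  qed
  have "infsum T {t \<in> {a<..<b}. \<not> isCont g t} = infsum T {a<..<b}"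
    by (rule infsum_cong_neutral) (use T0 in auto)
  moreover have "infsum T {a..<b} = T a + infsum T {a<..<b}"
  proof -
    have "{a..<b} = insert a {a<..<b}" using ab by auto
    moreover have "T summable_on {a<..<b}"
    proof -
      have "{a<..<b} \<subseteq> {a..<b}" by auto
      from T_summable[OF this] show ?thesis unfolding T_def[abs_def] gC_def .
    qed
    ultimately show ?thesis by (simp add: infsum_insert)
  qed
  ultimately have Seq: "S = infsum T {a..<b}"
    unfolding S_def T_def gC_def by simp
  have Xb: "\<bar>X\<bar> \<le> H * (b - a)" using gC_bound[of a] ab unfolding X_def gC_def by auto
  have c1: "\<bar>fC a * X + S - I\<bar> \<le> (H * (b - a)) * X"
  proof -
    have "\<bar>fC x - fC a\<bar> \<le> H * (b - a)" if x: "x \<in> {a..b}" for x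
    proof -
      have "a \<in> {a..b}" using ab by auto
      hence "\<bar>fC x - fC a\<bar> \<le> H * \<bar>x - a\<bar>" using fC_lip x unfolding lipschitz_const_on_def fC_def by blast
      also have "\<dots> \<le> H * (b - a)" using x Hnn by (intro mult_left_mono) auto
      finally show ?thesis .
    qed
    from core[of "fC a" "H * (b - a)"] this show ?thesis
      unfolding Seq I_def X_def T_def gC_def fC_def by simp
  qed
  have c2: "\<bar>(fC a + fC b) / 2 * X + S - I\<bar> \<le> (H * (b - a) / 2) * X"
  proof -
    have "\<bar>fC x - (fC a + fC b) / 2\<bar> \<le> H * (b - a) / 2" if x: "x \<in> {a..b}" for x
    proof -
      have ab': "a \<in> {a..b}" "b \<in> {a..b}" using ab by auto
      have "\<bar>fC x - fC a\<bar> \<le> H * \<bar>x - a\<bar>" using fC_lip x ab' unfolding lipschitz_const_on_def fC_def by blast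
      moreover have "\<bar>fC x - fC b\<bar> \<le> H * \<bar>x - b\<bar>" using fC_lip x ab' unfolding lipschitz_const_on_def fC_def by blast
      moreover have "H * \<bar>x - a\<bar> + H * \<bar>x - b\<bar> = H * (b - a)" using x by (auto simp: algebra_simps)
      moreover have "\<bar>(fC x - fC a) + (fC x - fC b)\<bar> \<le> \<bar>fC x - fC a\<bar> + \<bar>fC x - fC b\<bar>"
        by (rule abs_triangle_ineq)
      ultimately have "\<bar>(fC x - fC a) + (fC x - fC b)\<bar> \<le> H * (b - a)" by linarith
      moreover have "\<bar>(fC x - fC a) + (fC x - fC b)\<bar> = 2 * \<bar>fC x - (fC a + fC b) / 2\<bar>"
      proof -
        have eq: "(fC x - fC a) + (fC x - fC b) = 2 * (fC x - (fC a + fC b) / 2)" by (simp add: field_simps)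
        show ?thesis unfolding eq abs_mult by simp
      qed
      ultimately show ?thesis by simp
    qed
    from core[of "(fC a + fC b) / 2" "H * (b - a) / 2"] this show ?thesis
      unfolding Seq I_def X_def T_def gC_def fC_def by simp
  qed
  have "(H * (b - a)) * X \<le> (H * (b - a)) * (H * (b - a))"
    using Xb Hnn ab by (intro mult_left_mono) auto
  moreover have "(H * (b - a) / 2) * X \<le> (H * (b - a) / 2) * (H * (b - a))"
    using Xb Hnn ab by (intro mult_left_mono) auto
  ultimately show ?thesis using c1 c2 unfolding X_def gC_def fC_def
    by (simp add: power2_eq_square algebra_simps)
qed

end
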